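(* Let $C=(C_n,d_n)_{n\in\mathbb{Z}}$ be a free chain complex of $\mathbb{Z}$-modules with distinguished $\mathbb{Z}$-bases $\beta_n\subset C_n$, equipped with a finite filtration $0=C^0\subseteq C^1\subseteq\cdots\subseteq C^m=C$ by sub-chain complexes, each $C^i_n$ being the submodule spanned by $\beta_n\cap C^i_n$. Let $V=\{(\sigma_i;\tau_i)\}_{i\in I}$ be an admissible discrete vector field on $C$ such that for every $i\in I$ the cells $\sigma_i$ and $\tau_i$ have the same filtration index. Then the canonical vector-field reduction $\rho=(f,g,h):(C_n,d_n)\Rightarrow(C^c_n,d'_n)$ is compatible with the filtration: the differential $d'$ preserves the filtration $C^{c,i}_n=\mathbb{Z}[\beta^c_n\cap C^i_n]$ of the critical complex (so $C^c$ is a filtered chain complex), $f$ and $g$ are filtered chain complex morphisms ($f(C^i_n)\subseteq C^{c,i}_n$, $g(C^{c,i}_n)\subseteq C^i_n$), and $h(C^i_n)\subseteq C^i_{n+1}$ for all $n,i$, i.e. the homotopy $h$ has order $\leq 0$.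
   Context: A reduction $\rho=(f,g,h):D\Rightarrow C'$ between chain complexes consists of chain morphisms $f:D\to C'$, $g:C'\to D$ and a degree $+1$ homomorphism $h:D\to D$ with $fg=\mathrm{id}$, $gf+dh+hd=\mathrm{id}_D$, $fh=0$, $hg=0$, $hh=0$. A generator $\sigma\in\beta_n$ has filtration index $i$ if $\sigma\in C^i_n$ and $\sigma\notin C^{i-1}_n$. A discrete vector field (DVF) on $C$ is a set $V=\{(\sigma_i;\tau_i)\}_{i\in I}$ with $\sigma_i\in\beta_n$, $\tau_i\in\beta_{n+1}$ for some $n$ (depending on $i$), the coefficient of $\sigma_i$ in $d\tau_i$ equal to $\pm1$, and each basis element appearing at most once in $V$. Cells not appearing in $V$ are critical. A $V$-path of degree $n$ and length $m$ is a sequence $\{(\sigma_{i_k};\tau_{i_k})\}_{0\le k<m}$ of elements of $V$ with each $\tau_{i_k}$ an $n$-cell and, for $0<k<m$, $\sigma_{i_k}$ a face (nonzero coefficient in $d\tau_{i_{k-1}}$) of $\tau_{i_{k-1}}$ different from $\sigma_{i_{k-1}}$; it starts from $\sigma_{i_0}$. $V$ is admissible if for each $n$ there is a function $\lambda_n:\beta_n\to\mathbb{N}$ such that every $V$-path starting from $\sigma\in\beta_n$ has length at most $\lambda_n(\sigma)$. Canonical reduction: $V$ splits each $\beta_n=\beta^t_n\sqcup\beta^s_n\sqcup\beta^c_n$ into target cells (the $\tau_i$), source cells (the $\sigma_i$) and critical cells, hence $C_n=C^t_n\oplus C^s_n\oplus C^c_n$, and $d_n$ is written as a $3\times3$ block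 matrix $(d_{n,a,b})$ with respect to these decompositions (index $1=t$, $2=s$, $3=c$). For admissible $V$, $d_{n,2,1}:C^t_n\to C^s_{n-1}$ is an isomorphism. Then $C^c_n=\mathbb{Z}[\beta^c_n]$ and $d'_n=d_{n,3,3}-d_{n,3,1}d_{n,2,1}^{-1}d_{n,2,3}$, $f_n=[\,0\;\; -d_{n,3,1}d_{n,2,1}^{-1}\;\;1\,]$, $g_n=[\,-d_{n,2,1}^{-1}d_{n,2,3};\;0;\;1\,]^T$ (column), and $h_n$ is the block matrix whose only nonzero block is $d_{n,2,1}^{-1}$ in position $(1,2)$, i.e. $h$ sends $C^s_{n}$ to $C^t_{n+1}$ via $d_{n+1,2,1}^{-1}$ and is zero on $C^t_n\oplus C^c_n$. This $\rho$ is a reduction. *)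

theory Defs
  imports Main
begin

text \<open>Cells of the distinguished bases are the elements of a type 'a; each cell
has a degree (dim). Chains are finitely supported functions 'a => int
(coefficient of each basis cell). The differential is given by incidence
numbers: inc tau sigma = coefficient of sigma in d(tau).\<close>

definition csupp :: "('a \<Rightarrow> int) \<Rightarrow> 'a set" where
  "csupp c = {x. c x \<noteq> 0}"

definition lin :: "('a \<Rightarrow> 'b \<Rightarrow> int) \<Rightarrow> ('a \<Rightarrow> int) \<Rightarrow> 'b \<Rightarrow> int" where
  "lin F c = (\<lambda>y. \<Sum>x\<in>csupp c. c x * F x y)"

definition bd :: "('a \<Rightarrow> 'a \<Rightarrow> int) \<Rightarrow> ('a \<Rightarrow> int) \<Rightarrow> 'a \<Rightarrow> int" where
  "bd inc = lin inc"

definition proj :: "'a set \<Rightarrow> ('a \<Rightarrow> int) \<Rightarrow> 'a \<Rightarrow> int" where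
  "proj A c = (\<lambda>x. if x \<in> A then c x else 0)"

definition sgl :: "'a \<Rightarrow> 'a \<Rightarrow> int" where
  "sgl s = (\<lambda>x. if x = s then 1 else 0)"

definition free_chain_complex :: "('a \<Rightarrow> int) \<Rightarrow> ('a \<Rightarrow> 'a \<Rightarrow> int) \<Rightarrow> bool" where
  "free_chain_complex dim inc \<longleftrightarrow>
     (\<forall>t. finite {s. inc t s \<noteq> 0}) \<and>
     (\<forall>t s. inc t s \<noteq> 0 \<longrightarrow> dim s = dim t - 1) \<and>
     (\<forall>t r. (\<Sum>s\<in>{s. inc t s \<noteq> 0}. inc t s * inc s r) = 0)"

text \<open>Finite filtration 0 = C^0 <= C^1 <= ... <= C^m = C by sub-chain complexes,
C^i_n spanned by the basis cells in F i of degree n.\<close>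
definition filtration :: "('a \<Rightarrow> 'a \<Rightarrow> int) \<Rightarrow> (nat \<Rightarrow> 'a set) \<Rightarrow> nat \<Rightarrow> bool" where
  "filtration inc F m \<longleftrightarrow>
     F 0 = {} \<and> (\<forall>i<m. F i \<subseteq> F (Suc i)) \<and> F m = UNIV \<and>
     (\<forall>i\<le>m. \<forall>t\<in>F i. \<forall>s. inc t s \<noteq> 0 \<longrightarrow> s \<in> F i)"

definition filt_index :: "(nat \<Rightarrow> 'a set) \<Rightarrow> 'a \<Rightarrow> nat" where
  "filt_index F x = (LEAST i. x \<in> F i)"

definition DVF :: "('a \<Rightarrow> int) \<Rightarrow> ('a \<Rightarrow> 'a \<Rightarrow> int) \<Rightarrow> ('a \<times> 'a) set \<Rightarrow> bool" where
  "DVF dim inc V \<longleftrightarrow>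
     (\<forall>(s, t)\<in>V. dim t = dim s + 1 \<and> (inc t s = 1 \<or> inc t s = -1)) \<and>
     (\<forall>(s, t)\<in>V. \<forall>(s', t')\<in>V.
        (s = s' \<or> t = t' \<or> s = t' \<or> t = s') \<longrightarrow> (s, t) = (s', t'))"

definition V_path :: "('a \<Rightarrow> 'a \<Rightarrow> int) \<Rightarrow> ('a \<times> 'a) set \<Rightarrow> ('a \<times> 'a) list \<Rightarrow> bool" where
  "V_path inc V ps \<longleftrightarrow> set ps \<subseteq> V \<and>
     (\<forall>k. 0 < k \<and> k < length ps \<longrightarrow>
        inc (snd (ps ! (k - 1))) (fst (ps ! k)) \<noteq> 0 \<and> fst (ps ! k) \<noteq> fst (ps ! (k - 1)))"

definition admissible :: "('a \<Rightarrow> int) \<Rightarrow> ('a \<Rightarrow> 'a \<Rightarrow> int) \<Rightarrow> ('a \<times> 'a) set \<Rightarrow> bool" where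
  "admissible dim inc V \<longleftrightarrow>
     (\<exists>lam :: int \<Rightarrow> 'a \<Rightarrow> nat. \<forall>n s ps.
        dim s = n \<longrightarrow> V_path inc V ps \<longrightarrow> ps \<noteq> [] \<longrightarrow> fst (hd ps) = s \<longrightarrow>
        length ps \<le> lam n s)"

definition sources :: "('a \<times> 'a) set \<Rightarrow> 'a set" where "sources V = fst ` V"
definition targets :: "('a \<times> 'a) set \<Rightarrow> 'a set" where "targets V = snd ` V"
definition critical :: "('a \<times> 'a) set \<Rightarrow> 'a set" where
  "critical V = - (sources V \<union> targets V)"

text \<open>d_{2,1}^{-1} on a source cell: the unique chain in C^t whose boundary has
source-component exactly that cell; extended linearly.\<close>
definition psi :: "('a \<Rightarrow> 'a \<Rightarrow> int) \<Rightarrow> ('a \<times> 'a) set \<Rightarrow> 'a \<Rightarrow> 'a \<Rightarrow> int" where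
  "psi inc V s = (THE c. finite (csupp c) \<and> csupp c \<subseteq> targets V \<and>
                         proj (sources V) (bd inc c) = sgl s)"

definition d21inv :: "('a \<Rightarrow> 'a \<Rightarrow> int) \<Rightarrow> ('a \<times> 'a) set \<Rightarrow> ('a \<Rightarrow> int) \<Rightarrow> 'a \<Rightarrow> int" where
  "d21inv inc V = lin (psi inc V)"

definition red_h :: "('a \<Rightarrow> 'a \<Rightarrow> int) \<Rightarrow> ('a \<times> 'a) set \<Rightarrow> ('a \<Rightarrow> int) \<Rightarrow> 'a \<Rightarrow> int" where
  "red_h inc V c = d21inv inc V (proj (sources V) c)"

definition red_f :: "('a \<Rightarrow> 'a \<Rightarrow> int) \<Rightarrow> ('a \<times> 'a) set \<Rightarrow> ('a \<Rightarrow> int) \<Rightarrow> 'a \<Rightarrow> int" where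
  "red_f inc V c = (\<lambda>x. proj (critical V) c x
                        - proj (critical V) (bd inc (d21inv inc V (proj (sources V) c))) x)"

definition red_g :: "('a \<Rightarrow> 'a \<Rightarrow> int) \<Rightarrow> ('a \<times> 'a) set \<Rightarrow> ('a \<Rightarrow> int) \<Rightarrow> 'a \<Rightarrow> int" where
  "red_g inc V c = (\<lambda>x. c x - d21inv inc V (proj (sources V) (bd inc c)) x)"

definition red_d :: "('a \<Rightarrow> 'a \<Rightarrow> int) \<Rightarrow> ('a \<times> 'a) set \<Rightarrow> ('a \<Rightarrow> int) \<Rightarrow> 'a \<Rightarrow> int" where
  "red_d inc V c = (\<lambda>x. proj (critical V) (bd inc c) x
       - proj (critical V) (bd inc (d21inv inc V (proj (sources V) (bd inc c)))) x)"

end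

theory Submission
  imports Defs
begin


lemma lin_superset:
  assumes "finite S" "csupp c \<subseteq> S"
  shows "lin G c y = (\<Sum>x\<in>S. c x * G x y)"
  unfolding lin_def
  by (rule sum.mono_neutral_left) (use assms in \<open>auto simp: csupp_def\<close>)

lemma csupp_lin:
  "csupp (lin G c) \<subseteq> (\<Union>x\<in>csupp c. csupp (G x))"
proof
  fix y assume y: "y \<in> csupp (lin G c)"
  show "y \<in> (\<Union>x\<in>csupp c. csupp (G x))"
  proof (rule ccontr)
    assume "y \<notin> (\<Union>x\<in>csupp c. csupp (G x))"
    hence "\<forall>x\<in>csupp c. G x y = 0" by (auto simp: csupp_def)
    hence "lin G c y = 0" unfolding lin_def by simp
    with y show False by (simp add: csupp_def)
  qed
qed

lemma lin_sum:
  assumes K: "finite K" and f: "\<forall>k\<in>K. finite (csupp (c k))"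
  shows "lin G (\<lambda>x. \<Sum>k\<in>K. a k * c k x) y = (\<Sum>k\<in>K. a k * lin G (c k) y)"
proof -
  define S where "S = (\<Union>k\<in>K. csupp (c k))"
  have fS: "finite S" using K f by (simp add: S_def)
  have sub: "csupp (\<lambda>x. \<Sum>k\<in>K. a k * c k x) \<subseteq> S"
  proof
    fix x assume "x \<in> csupp (\<lambda>x. \<Sum>k\<in>K. a k * c k x)"
    hence "(\<Sum>k\<in>K. a k * c k x) \<noteq> 0" by (simp add: csupp_def)
    then obtain k where "k \<in> K" "c k x \<noteq> 0" by (metis (mono_tags, lifting) mult_zero_right sum.neutral)
    thus "x \<in> S" by (auto simp: S_def csupp_def)
  qed
  have "lin G (\<lambda>x. \<Sum>k\<in>K. a k * c k x) y = (\<Sum>x\<in>S. (\<Sum>k\<in>K. a k * c k x) * G x y)"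
    by (rule lin_superset[OF fS sub])
  also have "\<dots> = (\<Sum>k\<in>K. a k * (\<Sum>x\<in>S. c k x * G x y))"
    by (simp add: sum_distrib_right sum_distrib_left mult.assoc sum.swap[of _ S])
  also have "\<dots> = (\<Sum>k\<in>K. a k * lin G (c k) y)"
  proof (rule sum.cong[OF refl])
    fix k assume "k \<in> K"
    hence "csupp (c k) \<subseteq> S" by (auto simp: S_def)
    thus "a k * (\<Sum>x\<in>S. c k x * G x y) = a k * lin G (c k) y"
      using lin_superset[OF fS, of "c k" G y] by simp
  qed
  finally show ?thesis .
qed

lemma lin_diff:
  assumes "finite (csupp c1)" "finite (csupp c2)"
  shows "lin G (\<lambda>x. c1 x - c2 x) y = lin G c1 y - lin G c2 y"
proof -
  define S where "S = csupp c1 \<union> csupp c2"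
  have fS: "finite S" using assms by (simp add: S_def)
  have "csupp (\<lambda>x. c1 x - c2 x) \<subseteq> S" by (auto simp: S_def csupp_def)
  hence "lin G (\<lambda>x. c1 x - c2 x) y = (\<Sum>x\<in>S. (c1 x - c2 x) * G x y)"
    by (rule lin_superset[OF fS])
  also have "\<dots> = (\<Sum>x\<in>S. c1 x * G x y) - (\<Sum>x\<in>S. c2 x * G x y)"
    by (simp add: left_diff_distrib sum_subtractf)
  also have "\<dots> = lin G c1 y - lin G c2 y"
    using lin_superset[OF fS, of c1 G y] lin_superset[OF fS, of c2 G y] by (simp add: S_def)
  finally show ?thesis .
qed

lemma csupp_sgl: "csupp (sgl t) = {t}" by (auto simp: csupp_def sgl_def)

lemma lin_sgl: "lin G (sgl t) y = G t y"
  unfolding lin_def csupp_sgl by (simp add: sgl_def)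

lemma csupp_proj: "csupp (proj A c) \<subseteq> csupp c \<inter> A"
  by (auto simp: csupp_def proj_def)

lemma csupp_diff: "csupp (\<lambda>x. a x - b x) \<subseteq> csupp a \<union> csupp b"
  by (auto simp: csupp_def)



locale vfs =
  fixes dim :: "'a \<Rightarrow> int" and inc :: "'a \<Rightarrow> 'a \<Rightarrow> int"
    and V :: "('a \<times> 'a) set" and F :: "nat \<Rightarrow> 'a set" and m :: nat
  assumes cc: "free_chain_complex dim inc"
    and filt: "filtration inc F m"
    and dvf: "DVF dim inc V"
    and adm: "admissible dim inc V"
    and same_index: "\<forall>(s, t)\<in>V. filt_index F s = filt_index F t"
begin

definition paths_from :: "'a \<Rightarrow> ('a \<times> 'a) list set" where
  "paths_from s = {ps. V_path inc V ps \<and> ps \<noteq> [] \<and> fst (hd ps) = s}"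

definition mu :: "'a \<Rightarrow> nat" where
  "mu s = Max (length ` paths_from s)"

lemma fin_paths: "finite (length ` paths_from s)"
proof -
  obtain lam :: "int \<Rightarrow> 'a \<Rightarrow> nat" where lam: "\<forall>n s ps.
        dim s = n \<longrightarrow> V_path inc V ps \<longrightarrow> ps \<noteq> [] \<longrightarrow> fst (hd ps) = s \<longrightarrow>
        length ps \<le> lam n s" using adm unfolding admissible_def by blast
  have "length ` paths_from s \<subseteq> {..lam (dim s) s}"
    using lam by (auto simp: paths_from_def)
  thus ?thesis using finite_subset by blast
qed

lemma single_path: "(s, t) \<in> V \<Longrightarrow> [(s, t)] \<in> paths_from s"
  by (auto simp: paths_from_def V_path_def)

lemma cons_path:
  assumes st: "(s, t) \<in> V" and ps: "ps \<in> paths_from s'" and i: "inc t s' \<noteq> 0" and ne: "s' \<noteq> s"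
  shows "(s, t) # ps \<in> paths_from s"
proof -
  have vp: "V_path inc V ps" "ps \<noteq> []" "fst (hd ps) = s'" using ps by (auto simp: paths_from_def)
  have A: "set ((s, t) # ps) \<subseteq> V" using vp st by (auto simp: V_path_def)
  have B: "\<forall>k. 0 < k \<and> k < length ((s, t) # ps) \<longrightarrow>
      inc (snd (((s, t) # ps) ! (k - 1))) (fst (((s, t) # ps) ! k)) \<noteq> 0 \<and>
          fst (((s, t) # ps) ! k) \<noteq> fst (((s, t) # ps) ! (k - 1))"
  proof (intro allI impI)
    fix k assume k: "0 < k \<and> k < length ((s, t) # ps)"
    show "inc (snd (((s, t) # ps) ! (k - 1))) (fst (((s, t) # ps) ! k)) \<noteq> 0 \<and>
          fst (((s, t) # ps) ! k) \<noteq> fst (((s, t) # ps) ! (k - 1))"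
    proof (cases "k = 1")
      case True
      then show ?thesis using vp i ne by (cases ps) auto
    next
      case False
      then obtain j where j: "k = Suc j" "0 < j" "j < length ps" using k
        by (metis One_nat_def Suc_less_eq gr0_conv_Suc length_Cons neq0_conv)
      have "inc (snd (ps ! (j - 1))) (fst (ps ! j)) \<noteq> 0 \<and> fst (ps ! j) \<noteq> fst (ps ! (j - 1))"
        using vp(1) j unfolding V_path_def by blast
      moreover have "((s, t) # ps) ! (k - 1) = ps ! (j - 1)" using j by (cases j) auto
      ultimately show ?thesis using j by simp
    qed
  qed
  have "V_path inc V ((s, t) # ps)" using A B unfolding V_path_def by blast
  thus ?thesis by (auto simp: paths_from_def)
qed

lemma mu_lt:
  assumes "(s, t) \<in> V" "(s', t') \<in> V" "inc t s' \<noteq> 0" "s' \<noteq> s"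
  shows "mu s' < mu s"
proof -
  have ne: "length ` paths_from s' \<noteq> {}" using single_path[OF assms(2)] by blast
  have "mu s' \<in> length ` paths_from s'" unfolding mu_def using Max_in[OF fin_paths ne] .
  then obtain ps where ps: "ps \<in> paths_from s'" "length ps = mu s'" by auto
  have "(s, t) # ps \<in> paths_from s" using cons_path[OF assms(1) ps(1) assms(3,4)] .
  hence "length ((s, t) # ps) \<le> mu s" unfolding mu_def using Max_ge[OF fin_paths] by blast
  thus ?thesis using ps by simp
qed

lemma dvf_unique:
  assumes "(s, t) \<in> V" "(s', t') \<in> V" "s = s' \<or> t = t'"
  shows "s = s' \<and> t = t'"
  using dvf assms unfolding DVF_def by fastforce

lemma dvf_pm: "(s, t) \<in> V \<Longrightarrow> inc t s = 1 \<or> inc t s = -1"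
  using dvf unfolding DVF_def by fastforce

lemma dvf_dim: "(s, t) \<in> V \<Longrightarrow> dim t = dim s + 1"
  using dvf unfolding DVF_def by fastforce

lemma fin_inc: "finite {s. inc t s \<noteq> 0}" using cc unfolding free_chain_complex_def by blast

lemma csupp_inc: "csupp (inc t) = {s. inc t s \<noteq> 0}" by (simp add: csupp_def)

lemma inc_dim: "inc t s \<noteq> 0 \<Longrightarrow> dim s = dim t - 1"
  using cc unfolding free_chain_complex_def by blast

lemma F_mono: "j \<le> i \<Longrightarrow> i \<le> m \<Longrightarrow> F j \<subseteq> F i"
proof (induction i)
  case 0 thus ?case by simp
next
  case (Suc i)
  show ?case
  proof (cases "j = Suc i")
    case False
    hence "F j \<subseteq> F i" using Suc by simp
    moreover have "F i \<subseteq> F (Suc i)" using filt Suc.prems unfolding filtration_def by simp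
    ultimately show ?thesis by blast
  qed simp
qed

lemma F_closed: "i \<le> m \<Longrightarrow> t \<in> F i \<Longrightarrow> inc t s \<noteq> 0 \<Longrightarrow> s \<in> F i"
  using filt unfolding filtration_def by blast

lemma F_pair: assumes "(s, t) \<in> V" "s \<in> F i" "i \<le> m" shows "t \<in> F i"
proof -
  have Fm: "F m = UNIV" using filt unfolding filtration_def by simp
  have "t \<in> F (filt_index F t)" unfolding filt_index_def
    by (rule LeastI[of _ m]) (simp add: Fm)
  moreover have "filt_index F t = filt_index F s" using same_index assms(1) by auto
  moreover have "filt_index F s \<le> i" unfolding filt_index_def by (rule Least_le) (rule assms(2))
  ultimately show ?thesis using F_mono assms(3) by auto
qed

definition good :: "'a \<Rightarrow> ('a \<Rightarrow> int) \<Rightarrow> bool" where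
  "good s c \<longleftrightarrow> finite (csupp c) \<and> csupp c \<subseteq> targets V \<and>
     proj (sources V) (bd inc c) = sgl s \<and> (\<forall>i\<le>m. s \<in> F i \<longrightarrow> csupp c \<subseteq> F i) \<and>
     (\<forall>x\<in>csupp c. dim x = dim s + 1)"

lemma exists_good: "(s, t) \<in> V \<Longrightarrow> \<exists>c. good s c"
proof (induction "mu s" arbitrary: s t rule: less_induct)
  case less
  note st = less.prems
  define K where "K = {k \<in> sources V. inc t k \<noteq> 0 \<and> k \<noteq> s}"
  have finK: "finite K" using fin_inc[of t] by (rule rev_finite_subset) (auto simp: K_def)
  have "\<forall>k\<in>K. \<exists>c. good k c"
  proof
    fix k assume k: "k \<in> K"
    then obtain tk where tk: "(k, tk) \<in> V" by (auto simp: K_def sources_def)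
    have "mu k < mu s" using mu_lt[OF st tk] k by (auto simp: K_def)
    thus "\<exists>c. good k c" using less.hyps tk by blast
  qed
  then obtain C where C: "\<forall>k\<in>K. good k (C k)" by metis
  define e where "e = inc t s"
  have ee: "e * e = 1" using dvf_pm[OF st] by (auto simp: e_def)
  define a where "a x = (if x = s then e else - e * inc t x)" for x
  define D where "D x = (if x = s then sgl t else C x)" for x
  define c where "c = (\<lambda>x. \<Sum>k\<in>insert s K. a k * D k x)"
  have sK: "s \<notin> K" by (simp add: K_def)
  have finD: "\<forall>k\<in>insert s K. finite (csupp (D k))"
    using C by (auto simp: D_def csupp_sgl good_def)
  have supp: "csupp c \<subseteq> (\<Union>k\<in>insert s K. csupp (D k))"
  proof
    fix x assume "x \<in> csupp c"
    hence "(\<Sum>k\<in>insert s K. a k * D k x) \<noteq> 0" by (simp add: csupp_def c_def)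
    then obtain k where "k \<in> insert s K" "D k x \<noteq> 0" by (metis (mono_tags, lifting) mult_zero_right sum.neutral)
    thus "x \<in> (\<Union>k\<in>insert s K. csupp (D k))" by (auto simp: csupp_def)
  qed
  have fin: "finite (csupp c)" using supp finD finK by (meson finite_UN_I finite_insert finite_subset)
  have tgt: "t \<in> targets V" using st by (force simp: targets_def)
  have sS: "s \<in> sources V" using st by (force simp: sources_def)
  have supp2: "csupp c \<subseteq> insert t (\<Union>k\<in>K. csupp (C k))"
    using supp sK by (auto simp: D_def csupp_sgl split: if_splits)
  have t1: "csupp c \<subseteq> targets V"
  proof -
    have "\<forall>k\<in>K. csupp (C k) \<subseteq> targets V" using C by (simp add: good_def)
    thus ?thesis using supp2 tgt by blast
  qed
  have bdc: "bd inc c y = e * inc t y + (\<Sum>k\<in>K. (- e * inc t k) * bd inc (C k) y)" for y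
  proof -
    have "bd inc c y = (\<Sum>k\<in>insert s K. a k * bd inc (D k) y)"
      unfolding bd_def c_def by (rule lin_sum[OF _ finD]) (simp add: finK)
    also have "\<dots> = a s * bd inc (D s) y + (\<Sum>k\<in>K. a k * bd inc (D k) y)"
      using sum.insert[OF finK sK] by simp
    also have "\<dots> = e * inc t y + (\<Sum>k\<in>K. (- e * inc t k) * bd inc (C k) y)"
      using sK by (auto simp: a_def D_def bd_def lin_sgl intro!: sum.cong)
    finally show ?thesis .
  qed
  have t2: "proj (sources V) (bd inc c) = sgl s"
  proof
    fix y
    show "proj (sources V) (bd inc c) y = sgl s y"
    proof (cases "y \<in> sources V")
      case False
      thus ?thesis using sS by (auto simp: proj_def sgl_def)
    next
      case True
      have Ck: "bd inc (C k) y = sgl k y" if "k \<in> K" for k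
      proof -
        have "proj (sources V) (bd inc (C k)) y = sgl k y" using C that by (simp add: good_def)
        thus ?thesis using True by (simp add: proj_def)
      qed
      have "(\<Sum>k\<in>K. (- e * inc t k) * bd inc (C k) y) = (\<Sum>k\<in>K. (- e * inc t k) * sgl k y)"
        using Ck by simp
      also have "\<dots> = (if y \<in> K then - e * inc t y else 0)"
        using finK by (simp add: sgl_def sum.delta if_distrib[of "\<lambda>z. _ * z"] cong: if_cong)
      finally have "proj (sources V) (bd inc c) y = e * inc t y + (if y \<in> K then - e * inc t y else 0)"
        using True bdc by (simp add: proj_def)
      thus ?thesis using True ee by (auto simp: K_def sgl_def e_def)
    qed
  qed
  have dts: "dim t = dim s + 1" using dvf_dim[OF st] .
  have t3: "\<forall>i\<le>m. s \<in> F i \<longrightarrow> csupp c \<subseteq> F i"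
  proof (intro allI impI)
    fix i assume i: "i \<le> m" "s \<in> F i"
    have tF: "t \<in> F i" using F_pair[OF st i(2) i(1)] .
    have "k \<in> F i" if "k \<in> K" for k using F_closed[OF i(1) tF] that by (auto simp: K_def)
    hence "\<forall>k\<in>K. csupp (C k) \<subseteq> F i" using C i(1) by (auto simp: good_def)
    thus "csupp c \<subseteq> F i" using supp2 tF by blast
  qed
  have t4: "\<forall>x\<in>csupp c. dim x = dim s + 1"
  proof
    fix x assume "x \<in> csupp c"
    then obtain k where k: "k \<in> insert s K" "x \<in> csupp (D k)" using supp by blast
    show "dim x = dim s + 1"
    proof (cases "k = s")
      case True thus ?thesis using k dts by (auto simp: D_def csupp_sgl)
    next
      case False
      hence kK: "k \<in> K" "x \<in> csupp (C k)" using k by (auto simp: D_def)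
      have "dim k = dim s" using kK inc_dim dts by (auto simp: K_def)
      thus ?thesis using C kK by (auto simp: good_def)
    qed
  qed
  show ?case using fin t1 t2 t3 t4 unfolding good_def by blast
qed

lemma injective:
  assumes fin: "finite (csupp c)" and tg: "csupp c \<subseteq> targets V"
    and z: "\<forall>y\<in>sources V. bd inc c y = 0"
  shows "csupp c = {}"
proof (rule ccontr)
  assume ne: "csupp c \<noteq> {}"
  define src where "src x = (SOME s. (s, x) \<in> V)" for x
  have srcV: "(src x, x) \<in> V" if "x \<in> targets V" for x
    using that unfolding src_def targets_def by (auto intro: someI)
  define M where "M = Max ((mu \<circ> src) ` csupp c)"
  have "M \<in> (mu \<circ> src) ` csupp c" unfolding M_def using fin ne by (intro Max_in) auto
  then obtain t0 where t0: "t0 \<in> csupp c" "mu (src t0) = M" by auto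
  have maxM: "mu (src x) \<le> M" if "x \<in> csupp c" for x
    unfolding M_def using fin that by (intro Max_ge) auto
  define s0 where "s0 = src t0"
  have st0: "(s0, t0) \<in> V" using srcV t0 tg s0_def by blast
  have s0S: "s0 \<in> sources V" using st0 by (force simp: sources_def)
  have others: "inc x s0 = 0" if "x \<in> csupp c" "x \<noteq> t0" for x
  proof (rule ccontr)
    assume nz: "inc x s0 \<noteq> 0"
    have sx: "(src x, x) \<in> V" using srcV that tg by blast
    have "s0 \<noteq> src x" using dvf_unique[OF st0 sx] that(2) by blast
    hence "mu s0 < mu (src x)" using mu_lt[OF sx st0 nz] by blast
    thus False using maxM[OF that(1)] t0 s0_def by simp
  qed
  have "bd inc c s0 = (\<Sum>x\<in>csupp c. c x * inc x s0)" by (simp add: bd_def lin_def)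
  also have "\<dots> = c t0 * inc t0 s0"
  proof -
    have "(\<Sum>x\<in>csupp c. c x * inc x s0) = c t0 * inc t0 s0 + (\<Sum>x\<in>csupp c - {t0}. c x * inc x s0)"
      using fin t0(1) by (rule sum.remove)
    also have "(\<Sum>x\<in>csupp c - {t0}. c x * inc x s0) = 0"
      using others by (intro sum.neutral) auto
    finally show ?thesis by simp
  qed
  finally have "bd inc c s0 = c t0 * inc t0 s0" .
  moreover have "c t0 \<noteq> 0" using t0 by (simp add: csupp_def)
  moreover have "inc t0 s0 \<noteq> 0" using dvf_pm[OF st0] by auto
  ultimately show False using z s0S by simp
qed

lemma psi_good: assumes st: "(s, t) \<in> V" shows "good s (psi inc V s)"
proof -
  obtain c where c: "good s c" using exists_good[OF st] by blast
  have uniq: "c' = c" if c': "finite (csupp c') \<and> csupp c' \<subseteq> targets V \<and> proj (sources V) (bd inc c') = sgl s" for c'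
  proof -
    define d where "d = (\<lambda>x. c' x - c x)"
    have f1: "finite (csupp c)" "finite (csupp c')" using c c' by (auto simp: good_def)
    have fd: "finite (csupp d)" unfolding d_def using f1 csupp_diff[of c' c]
      by (meson finite_UnI finite_subset)
    have td: "csupp d \<subseteq> targets V" unfolding d_def using c c' csupp_diff[of c' c]
      by (auto simp: good_def)
    have zd: "\<forall>y\<in>sources V. bd inc d y = 0"
    proof
      fix y assume y: "y \<in> sources V"
      have "proj (sources V) (bd inc c') y = proj (sources V) (bd inc c) y"
        using c c' by (simp add: good_def)
      hence "bd inc c' y = bd inc c y" using y by (simp add: proj_def)
      moreover have "bd inc d y = bd inc c' y - bd inc c y"
        unfolding d_def bd_def by (rule lin_diff[OF f1(2) f1(1)])
      ultimately show "bd inc d y = 0" by simp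
    qed
    have "csupp d = {}" by (rule injective[OF fd td zd])
    thus ?thesis by (auto simp: d_def csupp_def fun_eq_iff)
  qed
  have "psi inc V s = c"
    unfolding psi_def
  proof (rule the_equality)
    show "finite (csupp c) \<and> csupp c \<subseteq> targets V \<and> proj (sources V) (bd inc c) = sgl s"
      using c by (simp add: good_def)
  next
    fix c' assume "finite (csupp c') \<and> csupp c' \<subseteq> targets V \<and> proj (sources V) (bd inc c') = sgl s"
    thus "c' = c" by (rule uniq)
  qed
  thus ?thesis using c by simp
qed

lemma d21inv_good:
  assumes "finite (csupp c)" "csupp c \<subseteq> {x \<in> F i. dim x = n} \<inter> sources V" "i \<le> m"
  shows "finite (csupp (d21inv inc V c)) \<and> csupp (d21inv inc V c) \<subseteq> {x \<in> F i. dim x = n + 1}"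
proof -
  have g: "finite (csupp (psi inc V x)) \<and> csupp (psi inc V x) \<subseteq> {y \<in> F i. dim y = n + 1}"
    if "x \<in> csupp c" for x
  proof -
    have x: "x \<in> F i" "dim x = n" "x \<in> sources V" using assms(2) that by auto
    then obtain t where "(x, t) \<in> V" by (auto simp: sources_def)
    from psi_good[OF this] show ?thesis using x assms(3) unfolding good_def by auto
  qed
  have "csupp (d21inv inc V c) \<subseteq> (\<Union>x\<in>csupp c. csupp (psi inc V x))"
    unfolding d21inv_def by (rule csupp_lin)
  moreover have "finite (\<Union>x\<in>csupp c. csupp (psi inc V x))" using g assms(1) by blast
  ultimately show ?thesis using g by (blast intro: finite_subset)
qed

lemma bd_good:
  assumes "finite (csupp c)" "csupp c \<subseteq> {x \<in> F i. dim x = n}" "i \<le> m"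
  shows "finite (csupp (bd inc c)) \<and> csupp (bd inc c) \<subseteq> {x \<in> F i. dim x = n - 1}"
proof -
  have g: "finite (csupp (inc x)) \<and> csupp (inc x) \<subseteq> {y \<in> F i. dim y = n - 1}"
    if "x \<in> csupp c" for x
    using assms that fin_inc[of x] F_closed inc_dim by (auto simp: csupp_inc)
  have "csupp (bd inc c) \<subseteq> (\<Union>x\<in>csupp c. csupp (inc x))"
    unfolding bd_def by (rule csupp_lin)
  moreover have "finite (\<Union>x\<in>csupp c. csupp (inc x))" using g assms(1) by blast
  ultimately show ?thesis using g by (blast intro: finite_subset)
qed

lemma proj_good:
  assumes "finite (csupp c)" "csupp c \<subseteq> S"
  shows "finite (csupp (proj A c)) \<and> csupp (proj A c) \<subseteq> S \<inter> A"
  using assms csupp_proj[of A c] by (blast intro: finite_subset)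

lemma csupp_pd: "csupp (\<lambda>x. proj A a x - proj A b x) \<subseteq> (csupp a \<union> csupp b) \<inter> A"
  by (auto simp: csupp_def proj_def)

lemma main: "\<forall>i\<le>m. \<forall>n::int. \<forall>c.
     (finite (csupp c) \<and> csupp c \<subseteq> {x \<in> F i \<inter> critical V. dim x = n} \<longrightarrow>
        csupp (red_d inc V c) \<subseteq> {x \<in> F i \<inter> critical V. dim x = n - 1}) \<and>
     (finite (csupp c) \<and> csupp c \<subseteq> {x \<in> F i. dim x = n} \<longrightarrow>
        csupp (red_f inc V c) \<subseteq> {x \<in> F i \<inter> critical V. dim x = n}) \<and>
     (finite (csupp c) \<and> csupp c \<subseteq> {x \<in> F i \<inter> critical V. dim x = n} \<longrightarrow>
        csupp (red_g inc V c) \<subseteq> {x \<in> F i. dim x = n}) \<and>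
     (finite (csupp c) \<and> csupp c \<subseteq> {x \<in> F i. dim x = n} \<longrightarrow>
        csupp (red_h inc V c) \<subseteq> {x \<in> F i. dim x = n + 1})"
proof (intro allI impI conjI)
  fix i n c assume i: "i \<le> m"
  {
    assume a: "finite (csupp c) \<and> csupp c \<subseteq> {x \<in> F i \<inter> critical V. dim x = n}"
    have b1: "finite (csupp (bd inc c)) \<and> csupp (bd inc c) \<subseteq> {x \<in> F i. dim x = n - 1}"
      using bd_good[of c i n] a i by auto
    have p1: "finite (csupp (proj (sources V) (bd inc c))) \<and>
        csupp (proj (sources V) (bd inc c)) \<subseteq> {x \<in> F i. dim x = n - 1} \<inter> sources V"
      using proj_good b1 by blast
    have d1: "finite (csupp (d21inv inc V (proj (sources V) (bd inc c)))) \<and>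
       csupp (d21inv inc V (proj (sources V) (bd inc c))) \<subseteq> {x \<in> F i. dim x = n - 1 + 1}"
      using d21inv_good p1 i by blast
    have b2: "csupp (bd inc (d21inv inc V (proj (sources V) (bd inc c)))) \<subseteq> {x \<in> F i. dim x = n - 1 + 1 - 1}"
      using bd_good d1 i by blast
    show "csupp (red_d inc V c) \<subseteq> {x \<in> F i \<inter> critical V. dim x = n - 1}"
    proof -
      have "csupp (red_d inc V c) \<subseteq> (csupp (bd inc c) \<union> csupp (bd inc (d21inv inc V (proj (sources V) (bd inc c))))) \<inter> critical V"
        unfolding red_d_def by (rule csupp_pd)
      thus ?thesis using b1 b2 by auto
    qed
    show "csupp (red_g inc V c) \<subseteq> {x \<in> F i. dim x = n}"
    proof -
      have "csupp (red_g inc V c) \<subseteq> csupp c \<union> csupp (d21inv inc V (proj (sources V) (bd inc c)))"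
        unfolding red_g_def by (rule csupp_diff)
      thus ?thesis using a d1 by auto
    qed
  }
  {
    assume a: "finite (csupp c) \<and> csupp c \<subseteq> {x \<in> F i. dim x = n}"
    have p1: "finite (csupp (proj (sources V) c)) \<and>
        csupp (proj (sources V) c) \<subseteq> {x \<in> F i. dim x = n} \<inter> sources V"
      using proj_good a by blast
    have d1: "finite (csupp (d21inv inc V (proj (sources V) c))) \<and>
       csupp (d21inv inc V (proj (sources V) c)) \<subseteq> {x \<in> F i. dim x = n + 1}"
      using d21inv_good p1 i by blast
    have b2: "csupp (bd inc (d21inv inc V (proj (sources V) c))) \<subseteq> {x \<in> F i. dim x = n + 1 - 1}"
      using bd_good d1 i by blast
    show "csupp (red_f inc V c) \<subseteq> {x \<in> F i \<inter> critical V. dim x = n}"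
    proof -
      have "csupp (red_f inc V c) \<subseteq> (csupp c \<union> csupp (bd inc (d21inv inc V (proj (sources V) c)))) \<inter> critical V"
        unfolding red_f_def by (rule csupp_pd)
      thus ?thesis using a b2 by auto
    qed
    show "csupp (red_h inc V c) \<subseteq> {x \<in> F i. dim x = n + 1}"
      unfolding red_h_def using d1 by blast
  }
qed

end

theorem theorem3:
  fixes dim :: "'a \<Rightarrow> int" and inc :: "'a \<Rightarrow> 'a \<Rightarrow> int"
    and V :: "('a \<times> 'a) set" and F :: "nat \<Rightarrow> 'a set" and m :: nat
  assumes cc: "free_chain_complex dim inc"
    and filt: "filtration inc F m"
    and dvf: "DVF dim inc V"
    and adm: "admissible dim inc V"
    and same_index: "\<forall>(s, t)\<in>V. filt_index F s = filt_index F t"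
  shows "\<forall>i\<le>m. \<forall>n::int. \<forall>c.
     (finite (csupp c) \<and> csupp c \<subseteq> {x \<in> F i \<inter> critical V. dim x = n} \<longrightarrow>
        csupp (red_d inc V c) \<subseteq> {x \<in> F i \<inter> critical V. dim x = n - 1}) \<and>
     (finite (csupp c) \<and> csupp c \<subseteq> {x \<in> F i. dim x = n} \<longrightarrow>
        csupp (red_f inc V c) \<subseteq> {x \<in> F i \<inter> critical V. dim x = n}) \<and>
     (finite (csupp c) \<and> csupp c \<subseteq> {x \<in> F i \<inter> critical V. dim x = n} \<longrightarrow>
        csupp (red_g inc V c) \<subseteq> {x \<in> F i. dim x = n}) \<and>
     (finite (csupp c) \<and> csupp c \<subseteq> {x \<in> F i. dim x = n} \<longrightarrow>
        csupp (red_h inc V c) \<subseteq> {x \<in> F i. dim x = n + 1})"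
  using vfs.main[OF vfs.intro[OF assms]] .

end
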